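(* Let $(G,M,\Delta)$ be a Garside structure and $(H,N,\delta)$ a parabolic substructure. Let $\alpha\in G$, $\ell=\lg(H\alpha)$ and $\mathrm{Min}(\alpha)=\{\gamma\in H\alpha:\lg(\gamma)=\ell\}$. Then $\ell=d(\alpha,H)$, and the map $\mathrm{Min}(\alpha)\to\pi_H(\alpha)$, $\gamma\mapsto\alpha\gamma^{-1}$, is a well-defined bijection.
   Context: Let $G$ be a group and $M$ a submonoid with $M\cap M^{-1}=\{1\}$. Define $\alpha\le_L\beta$ iff $\alpha^{-1}\beta\in M$, and $\alpha\le_R\beta$ iff $\beta\alpha^{-1}\in M$. For $a\in M$ let $\mathrm{Div}_L(a)=\{b\in M: b\le_L a\}$, $\mathrm{Div}_R(a)=\{b\in M: b\le_R a\}$; $a$ is balanced if these coincide, and then $\mathrm{Div}(a)$ denotes this set. $M$ is Noetherian if each $a\in M$ admits an $n$ such that $a$ is not a product of more than $n$ non-trivial factors. A Garside structure $(G,M,\Delta)$: $\Delta\in M$ balanced, $M$ Noetherian, $\mathrm{Div}(\Delta)$ finite and generating $M$ as a monoid and $G$ as a group, $(G,\le_L)$ a lattice. A parabolic substructure $(H,N,\delta)$: $\delta\in M$ balanced, $H$ (resp. $N$) the subgroup (resp. submonoid) generated by $\mathrm{Div}(\delta)$, and $\mathrm{Div}(\delta)=\mathrm{Div}(\Delta)\cap N$; it is assumed $H\ne\{1\}$. $\lg$ is word length w.r.t. $\mathcal S=\mathrm{Div}(\Delta)\setminus\{1\}$; for a right coset $C$, $\lg(C)=\min_{\beta\in C}\lg(\beta)$.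 $d(\alpha,\beta)=\lg(\alpha^{-1}\beta)$, $d(\alpha,H)=\min_{\beta\in H}d(\alpha,\beta)$, $\pi_H(\alpha)=\{\beta\in H:d(\alpha,\beta)=d(\alpha,H)\}$. *)

theory Defs
  imports "HOL-Algebra.Algebra"
begin

definition wprod :: "('a, 'b) monoid_scheme \<Rightarrow> 'a list \<Rightarrow> 'a" where
  "wprod G xs = foldr (\<lambda>x y. x \<otimes>\<^bsub>G\<^esub> y) xs \<one>\<^bsub>G\<^esub>"

definition leL :: "('a, 'b) monoid_scheme \<Rightarrow> 'a set \<Rightarrow> 'a \<Rightarrow> 'a \<Rightarrow> bool" where
  "leL G M a b \<longleftrightarrow> inv\<^bsub>G\<^esub> a \<otimes>\<^bsub>G\<^esub> b \<in> M"

definition leR :: "('a, 'b) monoid_scheme \<Rightarrow> 'a set \<Rightarrow> 'a \<Rightarrow> 'a \<Rightarrow> bool" where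
  "leR G M a b \<longleftrightarrow> b \<otimes>\<^bsub>G\<^esub> inv\<^bsub>G\<^esub> a \<in> M"

definition DivL :: "('a, 'b) monoid_scheme \<Rightarrow> 'a set \<Rightarrow> 'a \<Rightarrow> 'a set" where
  "DivL G M a = {b \<in> M. leL G M b a}"

definition DivR :: "('a, 'b) monoid_scheme \<Rightarrow> 'a set \<Rightarrow> 'a \<Rightarrow> 'a set" where
  "DivR G M a = {b \<in> M. leR G M b a}"

definition balanced :: "('a, 'b) monoid_scheme \<Rightarrow> 'a set \<Rightarrow> 'a \<Rightarrow> bool" where
  "balanced G M a \<longleftrightarrow> a \<in> M \<and> DivL G M a = DivR G M a"

text \<open>Div a, meaningful for balanced a.\<close>
definition Div :: "('a, 'b) monoid_scheme \<Rightarrow> 'a set \<Rightarrow> 'a \<Rightarrow> 'a set" where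
  "Div G M a = DivL G M a"

inductive_set monoid_gen :: "('a, 'b) monoid_scheme \<Rightarrow> 'a set \<Rightarrow> 'a set"
  for G and S where
    one: "\<one>\<^bsub>G\<^esub> \<in> monoid_gen G S"
  | incl: "s \<in> S \<Longrightarrow> s \<in> monoid_gen G S"
  | mult: "x \<in> monoid_gen G S \<Longrightarrow> y \<in> monoid_gen G S \<Longrightarrow> x \<otimes>\<^bsub>G\<^esub> y \<in> monoid_gen G S"

definition pointed_submonoid :: "('a, 'b) monoid_scheme \<Rightarrow> 'a set \<Rightarrow> bool" where
  "pointed_submonoid G M \<longleftrightarrow> M \<subseteq> carrier G \<and> \<one>\<^bsub>G\<^esub> \<in> M
     \<and> (\<forall>x\<in>M. \<forall>y\<in>M. x \<otimes>\<^bsub>G\<^esub> y \<in> M)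
     \<and> M \<inter> (\<lambda>x. inv\<^bsub>G\<^esub> x) ` M = {\<one>\<^bsub>G\<^esub>}"

definition noetherian :: "('a, 'b) monoid_scheme \<Rightarrow> 'a set \<Rightarrow> bool" where
  "noetherian G M \<longleftrightarrow> (\<forall>a\<in>M. \<exists>n::nat. \<forall>xs. set xs \<subseteq> M - {\<one>\<^bsub>G\<^esub>} \<and> wprod G xs = a
      \<longrightarrow> length xs \<le> n)"

definition leL_order :: "('a, 'b) monoid_scheme \<Rightarrow> 'a set \<Rightarrow> 'a gorder" where
  "leL_order G M = \<lparr>carrier = carrier G, eq = (=), le = leL G M\<rparr>"

definition garside :: "('a, 'b) monoid_scheme \<Rightarrow> 'a set \<Rightarrow> 'a \<Rightarrow> bool" where
  "garside G M \<Delta> \<longleftrightarrow> group G \<and> pointed_submonoid G M \<and> balanced G M \<Delta>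
     \<and> noetherian G M \<and> finite (Div G M \<Delta>)
     \<and> monoid_gen G (Div G M \<Delta>) = M \<and> generate G (Div G M \<Delta>) = carrier G
     \<and> lattice (leL_order G M)"

definition parabolic :: "('a, 'b) monoid_scheme \<Rightarrow> 'a set \<Rightarrow> 'a \<Rightarrow> 'a set \<Rightarrow> 'a set \<Rightarrow> 'a \<Rightarrow> bool" where
  "parabolic G M \<Delta> H N \<delta> \<longleftrightarrow> \<delta> \<in> M \<and> balanced G M \<delta>
     \<and> H = generate G (Div G M \<delta>) \<and> N = monoid_gen G (Div G M \<delta>)
     \<and> Div G M \<delta> = Div G M \<Delta> \<inter> N \<and> H \<noteq> {\<one>\<^bsub>G\<^esub>}"

definition gens :: "('a, 'b) monoid_scheme \<Rightarrow> 'a set \<Rightarrow> 'a \<Rightarrow> 'a set" where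
  "gens G M \<Delta> = Div G M \<Delta> - {\<one>\<^bsub>G\<^esub>}"

definition lg :: "('a, 'b) monoid_scheme \<Rightarrow> 'a set \<Rightarrow> 'a \<Rightarrow> 'a \<Rightarrow> nat" where
  "lg G M \<Delta> x = (LEAST n. \<exists>xs. length xs = n
      \<and> set xs \<subseteq> gens G M \<Delta> \<union> (\<lambda>s. inv\<^bsub>G\<^esub> s) ` gens G M \<Delta> \<and> wprod G xs = x)"

definition lg_set :: "('a, 'b) monoid_scheme \<Rightarrow> 'a set \<Rightarrow> 'a \<Rightarrow> 'a set \<Rightarrow> nat" where
  "lg_set G M \<Delta> C = (LEAST n. n \<in> lg G M \<Delta> ` C)"

definition dist :: "('a, 'b) monoid_scheme \<Rightarrow> 'a set \<Rightarrow> 'a \<Rightarrow> 'a \<Rightarrow> 'a \<Rightarrow> nat" where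
  "dist G M \<Delta> a b = lg G M \<Delta> (inv\<^bsub>G\<^esub> a \<otimes>\<^bsub>G\<^esub> b)"

definition dist_set :: "('a, 'b) monoid_scheme \<Rightarrow> 'a set \<Rightarrow> 'a \<Rightarrow> 'a \<Rightarrow> 'a set \<Rightarrow> nat" where
  "dist_set G M \<Delta> a H = (LEAST n. n \<in> dist G M \<Delta> a ` H)"

definition proj :: "('a, 'b) monoid_scheme \<Rightarrow> 'a set \<Rightarrow> 'a \<Rightarrow> 'a set \<Rightarrow> 'a \<Rightarrow> 'a set" where
  "proj G M \<Delta> H a = {b \<in> H. dist G M \<Delta> a b = dist_set G M \<Delta> a H}"

end

theory Submission
  imports Defs
begin

lemma wprod_carrier: "group G \<Longrightarrow> set xs \<subseteq> carrier G \<Longrightarrow> wprod G xs \<in> carrier G"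
  by (induction xs) (auto simp: wprod_def group.is_monoid monoid.m_closed)

lemma wprod_append: "group G \<Longrightarrow> set xs \<subseteq> carrier G \<Longrightarrow> set ys \<subseteq> carrier G \<Longrightarrow>
   wprod G (xs @ ys) = wprod G xs \<otimes>\<^bsub>G\<^esub> wprod G ys"
proof (induction xs)
  case Nil
  then show ?case using wprod_carrier[of G ys] by (simp add: wprod_def group.is_monoid monoid.l_one)
next
  case (Cons a xs)
  then show ?case using wprod_carrier[of G ys] wprod_carrier[of G xs]
    by (simp add: wprod_def group.is_monoid monoid.m_assoc)
qed

lemma wprod_inv: "group G \<Longrightarrow> set xs \<subseteq> carrier G \<Longrightarrow>
   wprod G (rev (map (\<lambda>s. inv\<^bsub>G\<^esub> s) xs)) = inv\<^bsub>G\<^esub> (wprod G xs)"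
proof (induction xs)
  case Nil
  then show ?case by (simp add: wprod_def group.is_monoid monoid.inv_one)
next
  case (Cons a xs)
  have c: "wprod G xs \<in> carrier G" using Cons wprod_carrier by auto
  have s: "set (rev (map (\<lambda>s. inv\<^bsub>G\<^esub> s) xs)) \<subseteq> carrier G" using Cons by auto
  have "wprod G (rev (map (\<lambda>s. inv\<^bsub>G\<^esub> s) (a # xs)))
      = wprod G (rev (map (\<lambda>s. inv\<^bsub>G\<^esub> s) xs)) \<otimes>\<^bsub>G\<^esub> wprod G [inv\<^bsub>G\<^esub> a]"
    using wprod_append[OF Cons(2) s, of "[inv\<^bsub>G\<^esub> a]"] Cons by auto
  also have "\<dots> = inv\<^bsub>G\<^esub> (wprod G xs) \<otimes>\<^bsub>G\<^esub> inv\<^bsub>G\<^esub> a"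
    using Cons by (simp add: wprod_def group.is_monoid monoid.r_one)
  also have "\<dots> = inv\<^bsub>G\<^esub> (wprod G (a # xs))"
    using Cons c by (simp add: wprod_def group.inv_mult_group)
  finally show ?case .
qed

lemma lg_inv_aux:
  assumes G: "group G" and T: "T \<subseteq> carrier G" and x: "x \<in> carrier G"
    and P: "\<exists>xs. length xs = n \<and> set xs \<subseteq> T \<union> (\<lambda>s. inv\<^bsub>G\<^esub> s) ` T \<and> wprod G xs = x"
  shows "\<exists>xs. length xs = n \<and> set xs \<subseteq> T \<union> (\<lambda>s. inv\<^bsub>G\<^esub> s) ` T \<and> wprod G xs = inv\<^bsub>G\<^esub> x"
proof -
  obtain xs where xs: "length xs = n" "set xs \<subseteq> T \<union> (\<lambda>s. inv\<^bsub>G\<^esub> s) ` T" "wprod G xs = x"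
    using P by blast
  have sc: "set xs \<subseteq> carrier G" using xs(2) T G by (auto intro: group.inv_closed)
  have "set (rev (map (\<lambda>s. inv\<^bsub>G\<^esub> s) xs)) \<subseteq> T \<union> (\<lambda>s. inv\<^bsub>G\<^esub> s) ` T"
  proof
    fix y assume "y \<in> set (rev (map (\<lambda>s. inv\<^bsub>G\<^esub> s) xs))"
    then obtain z where z: "z \<in> set xs" "y = inv\<^bsub>G\<^esub> z" by auto
    show "y \<in> T \<union> (\<lambda>s. inv\<^bsub>G\<^esub> s) ` T"
    proof (cases "z \<in> T")
      case True then show ?thesis using z by auto
    next
      case False
      then obtain t where "t \<in> T" "z = inv\<^bsub>G\<^esub> t" using z xs(2) by auto
      then show ?thesis using z T G by (auto simp: group.inv_inv subset_iff)
    qed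
  qed
  then show ?thesis using xs sc wprod_inv[OF G sc]
    by (intro exI[of _ "rev (map (\<lambda>s. inv\<^bsub>G\<^esub> s) xs)"]) auto
qed

lemma lg_inv:
  assumes G: "group G" and T: "gens G M \<Delta> \<subseteq> carrier G" and x: "x \<in> carrier G"
  shows "lg G M \<Delta> (inv\<^bsub>G\<^esub> x) = lg G M \<Delta> x"
proof -
  have ix: "inv\<^bsub>G\<^esub> x \<in> carrier G" using G x by (simp add: group.inv_closed)
  have "\<And>n. (\<exists>xs. length xs = n \<and> set xs \<subseteq> gens G M \<Delta> \<union> (\<lambda>s. inv\<^bsub>G\<^esub> s) ` gens G M \<Delta> \<and> wprod G xs = inv\<^bsub>G\<^esub> x)
     = (\<exists>xs. length xs = n \<and> set xs \<subseteq> gens G M \<Delta> \<union> (\<lambda>s. inv\<^bsub>G\<^esub> s) ` gens G M \<Delta> \<and> wprod G xs = x)"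
    using lg_inv_aux[OF G T x] lg_inv_aux[OF G T ix] group.inv_inv[OF G x] by metis
  then show ?thesis unfolding lg_def by simp
qed

theorem lemma5p8:
  fixes G :: "('a, 'b) monoid_scheme"
  assumes "garside G M \<Delta>"
    and "parabolic G M \<Delta> H N \<delta>"
    and "\<alpha> \<in> carrier G"
  shows "lg_set G M \<Delta> (H #>\<^bsub>G\<^esub> \<alpha>) = dist_set G M \<Delta> \<alpha> H
    \<and> bij_betw (\<lambda>\<gamma>. \<alpha> \<otimes>\<^bsub>G\<^esub> inv\<^bsub>G\<^esub> \<gamma>)
        {\<gamma> \<in> H #>\<^bsub>G\<^esub> \<alpha>. lg G M \<Delta> \<gamma> = lg_set G M \<Delta> (H #>\<^bsub>G\<^esub> \<alpha>)}
        (proj G M \<Delta> H \<alpha>)"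
proof -
  have G: "group G" using assms(1) by (simp add: garside_def)
  have Mc: "M \<subseteq> carrier G" using assms(1) by (simp add: garside_def pointed_submonoid_def)
  have T: "gens G M \<Delta> \<subseteq> carrier G" using Mc by (auto simp: gens_def Div_def DivL_def)
  have Dc: "Div G M \<delta> \<subseteq> carrier G" using Mc by (auto simp: Div_def DivL_def)
  have H: "H = generate G (Div G M \<delta>)" using assms(2) unfolding parabolic_def by blast
  have sub: "subgroup H G" using H Dc group.generate_is_subgroup[OF G] by simp
  have Hc: "H \<subseteq> carrier G" using sub subgroup.subset by blast
  have a: "\<alpha> \<in> carrier G" by fact
  have coset: "H #>\<^bsub>G\<^esub> \<alpha> = (\<lambda>h. h \<otimes>\<^bsub>G\<^esub> \<alpha>) ` H" by (auto simp: r_coset_def)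
  have key: "\<And>h. h \<in> H \<Longrightarrow> lg G M \<Delta> (h \<otimes>\<^bsub>G\<^esub> \<alpha>) = dist G M \<Delta> \<alpha> (inv\<^bsub>G\<^esub> h)"
  proof -
    fix h assume h: "h \<in> H"
    have hc: "h \<in> carrier G" using h Hc by auto
    have "lg G M \<Delta> (h \<otimes>\<^bsub>G\<^esub> \<alpha>) = lg G M \<Delta> (inv\<^bsub>G\<^esub> (h \<otimes>\<^bsub>G\<^esub> \<alpha>))"
      using lg_inv[OF G T] hc a G by (simp add: group.is_monoid monoid.m_closed)
    also have "\<dots> = dist G M \<Delta> \<alpha> (inv\<^bsub>G\<^esub> h)"
      using hc a G by (simp add: dist_def group.inv_mult_group)
    finally show "?thesis h" .
  qed
  have imgeq: "lg G M \<Delta> ` (H #>\<^bsub>G\<^esub> \<alpha>) = dist G M \<Delta> \<alpha> ` H"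
  proof
    show "lg G M \<Delta> ` (H #>\<^bsub>G\<^esub> \<alpha>) \<subseteq> dist G M \<Delta> \<alpha> ` H"
      using key sub by (auto simp: coset intro: subgroup.m_inv_closed)
  next
    show "dist G M \<Delta> \<alpha> ` H \<subseteq> lg G M \<Delta> ` (H #>\<^bsub>G\<^esub> \<alpha>)"
    proof
      fix y assume "y \<in> dist G M \<Delta> \<alpha> ` H"
      then obtain b where b: "b \<in> H" "y = dist G M \<Delta> \<alpha> b" by auto
      have ib: "inv\<^bsub>G\<^esub> b \<in> H" using b sub by (simp add: subgroup.m_inv_closed)
      have "y = lg G M \<Delta> (inv\<^bsub>G\<^esub> b \<otimes>\<^bsub>G\<^esub> \<alpha>)"
        using key[OF ib] b Hc G by (auto simp: group.inv_inv)
      then show "y \<in> lg G M \<Delta> ` (H #>\<^bsub>G\<^esub> \<alpha>)" using ib coset by auto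
    qed
  qed
  have eq1: "lg_set G M \<Delta> (H #>\<^bsub>G\<^esub> \<alpha>) = dist_set G M \<Delta> \<alpha> H"
    unfolding lg_set_def dist_set_def imgeq ..
  have bij: "bij_betw (\<lambda>\<gamma>. \<alpha> \<otimes>\<^bsub>G\<^esub> inv\<^bsub>G\<^esub> \<gamma>)
        {\<gamma> \<in> H #>\<^bsub>G\<^esub> \<alpha>. lg G M \<Delta> \<gamma> = lg_set G M \<Delta> (H #>\<^bsub>G\<^esub> \<alpha>)}
        (proj G M \<Delta> H \<alpha>)"
  proof (rule bij_betw_imageI)
    show "inj_on (\<lambda>\<gamma>. \<alpha> \<otimes>\<^bsub>G\<^esub> inv\<^bsub>G\<^esub> \<gamma>)
        {\<gamma> \<in> H #>\<^bsub>G\<^esub> \<alpha>. lg G M \<Delta> \<gamma> = lg_set G M \<Delta> (H #>\<^bsub>G\<^esub> \<alpha>)}"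
    proof (rule inj_onI)
      fix x y assume x: "x \<in> {\<gamma> \<in> H #>\<^bsub>G\<^esub> \<alpha>. lg G M \<Delta> \<gamma> = lg_set G M \<Delta> (H #>\<^bsub>G\<^esub> \<alpha>)}"
        and y: "y \<in> {\<gamma> \<in> H #>\<^bsub>G\<^esub> \<alpha>. lg G M \<Delta> \<gamma> = lg_set G M \<Delta> (H #>\<^bsub>G\<^esub> \<alpha>)}"
        and e: "\<alpha> \<otimes>\<^bsub>G\<^esub> inv\<^bsub>G\<^esub> x = \<alpha> \<otimes>\<^bsub>G\<^esub> inv\<^bsub>G\<^esub> y"
      have xc: "x \<in> carrier G" and yc: "y \<in> carrier G"
        using x y coset Hc a G by (auto simp: group.is_monoid monoid.m_closed subset_iff)
      have "inv\<^bsub>G\<^esub> x = inv\<^bsub>G\<^esub> y"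
        using e G a xc yc by (simp add: group.inv_closed group.Units_eq monoid.Units_l_cancel group.is_monoid)
      then show "x = y" using G xc yc group.inv_equality
        by (metis group.inv_inv)
    qed
  next
    show "(\<lambda>\<gamma>. \<alpha> \<otimes>\<^bsub>G\<^esub> inv\<^bsub>G\<^esub> \<gamma>) `
        {\<gamma> \<in> H #>\<^bsub>G\<^esub> \<alpha>. lg G M \<Delta> \<gamma> = lg_set G M \<Delta> (H #>\<^bsub>G\<^esub> \<alpha>)} = proj G M \<Delta> H \<alpha>"
    proof
      show "(\<lambda>\<gamma>. \<alpha> \<otimes>\<^bsub>G\<^esub> inv\<^bsub>G\<^esub> \<gamma>) `
        {\<gamma> \<in> H #>\<^bsub>G\<^esub> \<alpha>. lg G M \<Delta> \<gamma> = lg_set G M \<Delta> (H #>\<^bsub>G\<^esub> \<alpha>)} \<subseteq> proj G M \<Delta> H \<alpha>"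
      proof
        fix z assume "z \<in> (\<lambda>\<gamma>. \<alpha> \<otimes>\<^bsub>G\<^esub> inv\<^bsub>G\<^esub> \<gamma>) `
          {\<gamma> \<in> H #>\<^bsub>G\<^esub> \<alpha>. lg G M \<Delta> \<gamma> = lg_set G M \<Delta> (H #>\<^bsub>G\<^esub> \<alpha>)}"
        then obtain h where h: "h \<in> H" "z = \<alpha> \<otimes>\<^bsub>G\<^esub> inv\<^bsub>G\<^esub> (h \<otimes>\<^bsub>G\<^esub> \<alpha>)"
          "lg G M \<Delta> (h \<otimes>\<^bsub>G\<^esub> \<alpha>) = lg_set G M \<Delta> (H #>\<^bsub>G\<^esub> \<alpha>)"
          using coset by auto
        have hc: "h \<in> carrier G" using h Hc by auto
        have "z = \<alpha> \<otimes>\<^bsub>G\<^esub> (inv\<^bsub>G\<^esub> \<alpha> \<otimes>\<^bsub>G\<^esub> inv\<^bsub>G\<^esub> h)"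
          using h hc a G by (simp add: group.inv_mult_group)
        also have "\<dots> = inv\<^bsub>G\<^esub> h"
          using hc a G by (simp add: group.inv_solve_left group.inv_closed group.is_monoid monoid.m_closed
              monoid.m_assoc[symmetric] group.r_inv monoid.l_one)
        finally have z: "z = inv\<^bsub>G\<^esub> h" .
        show "z \<in> proj G M \<Delta> H \<alpha>"
          unfolding proj_def using z h key eq1 sub by (auto intro: subgroup.m_inv_closed)
      qed
    next
      show "proj G M \<Delta> H \<alpha> \<subseteq> (\<lambda>\<gamma>. \<alpha> \<otimes>\<^bsub>G\<^esub> inv\<^bsub>G\<^esub> \<gamma>) `
        {\<gamma> \<in> H #>\<^bsub>G\<^esub> \<alpha>. lg G M \<Delta> \<gamma> = lg_set G M \<Delta> (H #>\<^bsub>G\<^esub> \<alpha>)}"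
      proof
        fix b assume b: "b \<in> proj G M \<Delta> H \<alpha>"
        then have bH: "b \<in> H" and bd: "dist G M \<Delta> \<alpha> b = dist_set G M \<Delta> \<alpha> H"
          by (auto simp: proj_def)
        have bc: "b \<in> carrier G" using bH Hc by auto
        have ib: "inv\<^bsub>G\<^esub> b \<in> H" using bH sub by (simp add: subgroup.m_inv_closed)
        have l: "lg G M \<Delta> (inv\<^bsub>G\<^esub> b \<otimes>\<^bsub>G\<^esub> \<alpha>) = lg_set G M \<Delta> (H #>\<^bsub>G\<^esub> \<alpha>)"
          using key[OF ib] bd eq1 G bc by (simp add: group.inv_inv)
        have m: "inv\<^bsub>G\<^esub> b \<otimes>\<^bsub>G\<^esub> \<alpha> \<in> H #>\<^bsub>G\<^esub> \<alpha>" using ib coset by auto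
        have "\<alpha> \<otimes>\<^bsub>G\<^esub> inv\<^bsub>G\<^esub> (inv\<^bsub>G\<^esub> b \<otimes>\<^bsub>G\<^esub> \<alpha>) = \<alpha> \<otimes>\<^bsub>G\<^esub> (inv\<^bsub>G\<^esub> \<alpha> \<otimes>\<^bsub>G\<^esub> b)"
          using G bc a by (simp add: group.inv_mult_group group.inv_closed group.inv_inv)
        also have "\<dots> = b"
          using bc a G by (simp add: group.inv_closed group.is_monoid
              monoid.m_assoc[symmetric] group.r_inv monoid.l_one)
        finally show "b \<in> (\<lambda>\<gamma>. \<alpha> \<otimes>\<^bsub>G\<^esub> inv\<^bsub>G\<^esub> \<gamma>) `
          {\<gamma> \<in> H #>\<^bsub>G\<^esub> \<alpha>. lg G M \<Delta> \<gamma> = lg_set G M \<Delta> (H #>\<^bsub>G\<^esub> \<alpha>)}"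
          using l m by (intro image_eqI[of _ _ "inv\<^bsub>G\<^esub> b \<otimes>\<^bsub>G\<^esub> \<alpha>"]) auto
      qed
    qed
  qed
  show ?thesis using eq1 bij by simp
qed

end
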